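(* For each $i\in\{2,3,4\}$, the families $\mathrm{SLT}_1$ and $\mathrm{REG}_i^Z$ are incomparable, i.e., $\mathrm{SLT}_1\not\subseteq\mathrm{REG}_i^Z$ and $\mathrm{REG}_i^Z\not\subseteq\mathrm{SLT}_1$.
   Context: Strictly locally testable languages: let $V$ be an alphabet and $k\ge1$. For $B,I,E\subseteq V^k$ and $F\subseteq V^{\le k-1}$, $\mathrm{slt}(B,I,E,F)$ is the language over $V$ consisting of all words in $F$ together with all words $a_1\cdots a_n$ ($a_i\in V$, $n\ge k$) with $a_1\cdots a_k\in B$, $a_{j+1}\cdots a_{j+k}\in I$ for all $1\le j\le n-k-1$, and $a_{n-k+1}\cdots a_n\in E$. $\mathrm{SLT}_k$ is the family of languages of this form. For a regular language $L\subseteq V^*$, $\mathrm{State}(L)$ is the minimum number of states of a deterministic finite automaton over $V$ with total transition function accepting $L$; $\mathrm{REG}_n^Z=\{L\text{ regular}:\mathrm{State}(L)\le n\}$. *)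

theory Defs
  imports Main
begin

definition slt :: "'a set \<Rightarrow> nat \<Rightarrow> 'a list set \<Rightarrow> 'a list set \<Rightarrow> 'a list set \<Rightarrow> 'a list set \<Rightarrow> 'a list set" where
  "slt V k B I E F = F \<union>
     {w \<in> lists V. k \<le> length w \<and> take k w \<in> B
        \<and> (\<forall>j. 1 \<le> j \<and> j + k + 1 \<le> length w \<longrightarrow> take k (drop j w) \<in> I)
        \<and> drop (length w - k) w \<in> E}"

definition SLT :: "nat \<Rightarrow> 'a set \<Rightarrow> 'a list set set" where
  "SLT k V = {L. \<exists>B I E F.
      B \<subseteq> {w \<in> lists V. length w = k} \<and> I \<subseteq> {w \<in> lists V. length w = k}
    \<and> E \<subseteq> {w \<in> lists V. length w = k} \<and> F \<subseteq> {w \<in> lists V. length w + 1 \<le> k}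
    \<and> L = slt V k B I E F}"

definition dfa :: "'a set \<Rightarrow> 's set \<Rightarrow> 's \<Rightarrow> ('s \<Rightarrow> 'a \<Rightarrow> 's) \<Rightarrow> 's set \<Rightarrow> bool" where
  "dfa V Q q0 d Fin \<longleftrightarrow> finite Q \<and> q0 \<in> Q \<and> Fin \<subseteq> Q \<and> (\<forall>q\<in>Q. \<forall>a\<in>V. d q a \<in> Q)"

definition dfa_lang :: "'a set \<Rightarrow> 's \<Rightarrow> ('s \<Rightarrow> 'a \<Rightarrow> 's) \<Rightarrow> 's set \<Rightarrow> 'a list set" where
  "dfa_lang V q0 d Fin = {w \<in> lists V. foldl d q0 w \<in> Fin}"

definition accepts_with :: "'a set \<Rightarrow> nat \<Rightarrow> 'a list set \<Rightarrow> bool" where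
  "accepts_with V n L \<longleftrightarrow> (\<exists>(Q::nat set) q0 d Fin. dfa V Q q0 d Fin \<and> card Q = n \<and> dfa_lang V q0 d Fin = L)"

definition regular :: "'a set \<Rightarrow> 'a list set \<Rightarrow> bool" where
  "regular V L \<longleftrightarrow> (\<exists>n. accepts_with V n L)"

definition State :: "'a set \<Rightarrow> 'a list set \<Rightarrow> nat" where
  "State V L = (LEAST n. accepts_with V n L)"

definition REG_Z :: "'a set \<Rightarrow> nat \<Rightarrow> 'a list set set" where
  "REG_Z V n = {L. regular V L \<and> State V L \<le> n}"

end

theory Submission
  imports Defs
begin

definition "LL = slt {0,1,2::nat} 1 {[0],[1],[2]} {[1],[2]} {[0],[2]} {}"

lemma LL_SLT: "LL \<in> SLT 1 {0,1,2::nat}"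
  unfolding SLT_def LL_def by (rule CollectI, rule exI[of _ "{[0],[1],[2]}"],
     rule exI[of _ "{[1],[2]}"], rule exI[of _ "{[0],[2]}"], rule exI[of _ "{}"]) auto

lemma foldl_in: "dfa V Q q0 d Fin \<Longrightarrow> q \<in> Q \<Longrightarrow> w \<in> lists V \<Longrightarrow> foldl d q w \<in> Q"
  by (induction w arbitrary: q) (auto simp: dfa_def)

definition "WW = {[], [0], [1,0], [0,1], [0,0,0::nat]}"

lemma mem_in: "[0] \<in> LL" "[0,0] \<in> LL" "[1,0] \<in> LL" "[0,1,0] \<in> LL"
  unfolding LL_def slt_def by (auto simp: le_Suc_eq numeral_eq_Suc)
lemma mem_out: "[] \<notin> LL" "[0,0,0] \<notin> LL" "[1,0,0] \<notin> LL" "[1,0,0,0] \<notin> LL"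
   "[0,1] \<notin> LL" "[0,1,0,0] \<notin> LL" "[0,0,0,0] \<notin> LL" "[0,0,0,0,0] \<notin> LL"
  unfolding LL_def slt_def by (auto simp: le_Suc_eq numeral_eq_Suc)

lemma sep: "\<forall>u\<in>WW. \<forall>v\<in>WW. u \<noteq> v \<longrightarrow> (\<exists>z\<in>{[],[0],[0,0::nat]}. (u@z \<in> LL) \<noteq> (v@z \<in> LL))"
  unfolding WW_def
  using mem_in mem_out by (simp add: One_nat_def)

lemma LL_lower: assumes "accepts_with {0,1,2} n LL" shows "n \<ge> 5"
proof (rule ccontr)
  assume "\<not> n \<ge> 5"
  from assms obtain Q :: "nat set" and q0 d Fin where D: "dfa {0,1,2} Q q0 d Fin"
     and c: "card Q = n" and L: "dfa_lang {0,1,2} q0 d Fin = LL"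
    unfolding accepts_with_def by blast
  define f where "f w = foldl d q0 w" for w
  have WV: "WW \<subseteq> lists {0,1,2}" unfolding WW_def by auto
  have "f ` WW \<subseteq> Q" using foldl_in[OF D] D WV unfolding f_def dfa_def by blast
  moreover have "finite Q" using D by (simp add: dfa_def)
  ultimately have "card (f ` WW) \<le> n" using c card_mono by blast
  moreover have "card WW = 5" unfolding WW_def by simp
  ultimately have "\<not> inj_on f WW" using \<open>\<not> n \<ge> 5\<close> card_image by fastforce
  then obtain u v where uv: "u \<in> WW" "v \<in> WW" "u \<noteq> v" "f u = f v"
    unfolding inj_on_def by blast
  then obtain z where z: "z \<in> {[],[0],[0,0::nat]}" "(u@z \<in> LL) \<noteq> (v@z \<in> LL)"
    using sep by blast
  have "u@z \<in> LL \<longleftrightarrow> v@z \<in> LL"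
    using uv WV z(1) unfolding L[symmetric] dfa_lang_def f_def by auto
  with z show False by blast
qed

lemma part1: assumes "i \<le> 4" shows "\<not> (SLT 1 {0,1,2::nat} \<subseteq> REG_Z {0,1,2} i)"
proof
  assume "SLT 1 {0,1,2::nat} \<subseteq> REG_Z {0,1,2} i"
  with LL_SLT have "LL \<in> REG_Z {0,1,2} i" by blast
  then have r: "regular {0,1,2} LL" and s: "State {0,1,2} LL \<le> i" by (auto simp: REG_Z_def)
  from r have "accepts_with {0,1,2} (State {0,1,2} LL) LL"
    unfolding regular_def State_def by (rule LeastI_ex)
  with LL_lower s assms show False by fastforce
qed

definition "EV = {w \<in> lists {0::nat}. even (length w)}"

lemma foldl_par: "q < 2 \<Longrightarrow> foldl (\<lambda>q a. (q+1) mod 2) q w = (q + length w) mod (2::nat)"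
  by (induction w arbitrary: q) (auto simp: mod_Suc_eq mod_Suc)

lemma EV_acc: "accepts_with {0::nat} 2 EV"
  unfolding accepts_with_def
  apply (rule exI[of _ "{0,1}"], rule exI[of _ 0], rule exI[of _ "\<lambda>q a. (q+1) mod 2"], rule exI[of _ "{0}"])
  apply (auto simp: dfa_def dfa_lang_def EV_def foldl_par[of 0, simplified] even_iff_mod_2_eq_zero)
  done

lemma EV_not: "EV \<notin> SLT 1 {0::nat}"
proof
  assume "EV \<in> SLT 1 {0::nat}"
  then have "\<exists>B I E F. B \<subseteq> {w \<in> lists {0::nat}. length w = 1} \<and> I \<subseteq> {w \<in> lists {0}. length w = 1}
    \<and> E \<subseteq> {w \<in> lists {0}. length w = 1} \<and> F \<subseteq> {w \<in> lists {0}. length w + 1 \<le> 1}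
    \<and> EV = slt {0} 1 B I E F" unfolding SLT_def by (rule CollectD)
  then obtain B I E F where H: "B \<subseteq> {w \<in> lists {0::nat}. length w = 1} \<and> I \<subseteq> {w \<in> lists {0}. length w = 1}
    \<and> E \<subseteq> {w \<in> lists {0}. length w = 1} \<and> F \<subseteq> {w \<in> lists {0}. length w + 1 \<le> 1}
    \<and> EV = slt {0} 1 B I E F" by (elim exE) (rule that)
  have F: "F \<subseteq> {w \<in> lists {0::nat}. length w + 1 \<le> 1}" using H by (elim conjE)
  have L: "EV = slt {0} 1 B I E F" using H by (elim conjE)
  have "[0,0] \<in> EV" "[0,0,0,0] \<in> EV" "[0,0,0] \<notin> EV" by (auto simp: EV_def)
  then have s2: "[0,0] \<in> slt {0} 1 B I E F" and s4: "[0,0,0,0] \<in> slt {0} 1 B I E F"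
     and n3: "[0,0,0] \<notin> slt {0} 1 B I E F" by (simp_all only: L[symmetric] not_False_eq_True)
  have f2: "[0,0] \<notin> F" and f4: "[0,0,0,0] \<notin> F" using F by (auto simp del: lists.simps)
  have m2: "[0,0] \<in> {w \<in> lists {0}. 1 \<le> length w \<and> take 1 w \<in> B
        \<and> (\<forall>j. 1 \<le> j \<and> j + 1 + 1 \<le> length w \<longrightarrow> take 1 (drop j w) \<in> I)
        \<and> drop (length w - 1) w \<in> E}" using s2 f2 unfolding slt_def Un_iff by (elim disjE) simp_all
  have m4: "[0,0,0,0] \<in> {w \<in> lists {0}. 1 \<le> length w \<and> take 1 w \<in> B
        \<and> (\<forall>j. 1 \<le> j \<and> j + 1 + 1 \<le> length w \<longrightarrow> take 1 (drop j w) \<in> I)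
        \<and> drop (length w - 1) w \<in> E}" using s4 f4 unfolding slt_def Un_iff by (elim disjE) simp_all
  have b1: "take 1 [0,0::nat] \<in> B" using m2 by (elim CollectE conjE)
  have b2: "drop (length [0,0::nat] - 1) [0,0] \<in> E" using m2 by (elim CollectE conjE)
  have i4: "\<forall>j. 1 \<le> j \<and> j + 1 + 1 \<le> length [0,0,0,0::nat] \<longrightarrow> take 1 (drop j [0,0,0,0::nat]) \<in> I"
    using m4 by (elim CollectE conjE)
  have b: "[0] \<in> B" "[0] \<in> E" using b1 b2 by simp_all
  have "take 1 (drop 1 [0,0,0,0::nat]) \<in> I" using i4[rule_format, of 1] by simp
  then have i: "[0] \<in> I" by simp
  have "\<forall>j. 1 \<le> j \<and> j + 1 + 1 \<le> length [0,0,0::nat] \<longrightarrow> take 1 (drop j [0,0,0::nat]) \<in> I"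
  proof (intro allI impI)
    fix j assume "1 \<le> j \<and> j + 1 + 1 \<le> length [0,0,0::nat]"
    then have "j = 1" by simp
    then show "take 1 (drop j [0,0,0::nat]) \<in> I" using i by simp
  qed
  then have "[0,0,0] \<in> slt {0} 1 B I E F" using b unfolding slt_def by (intro UnI2 CollectI conjI) simp_all
  with n3 show False by blast
qed

lemma part2: assumes "2 \<le> i" shows "\<not> (REG_Z {0::nat} i \<subseteq> SLT 1 {0})"
proof
  assume a: "REG_Z {0::nat} i \<subseteq> SLT 1 {0}"
  have "State {0} EV \<le> 2" unfolding State_def using EV_acc by (rule Least_le)
  moreover have "regular {0} EV" unfolding regular_def using EV_acc by (rule exI)
  ultimately have "EV \<in> REG_Z {0} i" unfolding REG_Z_def using assms by simp
  with a EV_not show False by blast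
qed

theorem mainTheorem8:
  shows "\<forall>i\<in>{2,3,4::nat}.
    (\<exists>V::nat set. finite V \<and> V \<noteq> {} \<and> \<not> (SLT 1 V \<subseteq> REG_Z V i))
  \<and> (\<exists>V::nat set. finite V \<and> V \<noteq> {} \<and> \<not> (REG_Z V i \<subseteq> SLT 1 V))"
proof
  fix i :: nat assume "i \<in> {2,3,4}"
  then have "i \<le> 4" "2 \<le> i" by auto
  show "(\<exists>V::nat set. finite V \<and> V \<noteq> {} \<and> \<not> (SLT 1 V \<subseteq> REG_Z V i))
  \<and> (\<exists>V::nat set. finite V \<and> V \<noteq> {} \<and> \<not> (REG_Z V i \<subseteq> SLT 1 V))"
  proof (rule conjI)
    show "\<exists>V::nat set. finite V \<and> V \<noteq> {} \<and> \<not> (SLT 1 V \<subseteq> REG_Z V i)"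
      by (rule exI[of _ "{0,1,2}"], intro conjI) (simp, simp, rule part1[OF \<open>i \<le> 4\<close>])
    show "\<exists>V::nat set. finite V \<and> V \<noteq> {} \<and> \<not> (REG_Z V i \<subseteq> SLT 1 V)"
      by (rule exI[of _ "{0}"], intro conjI) (simp, simp, rule part2[OF \<open>2 \<le> i\<close>])
  qed
qed
end
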